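(* Let $Q_1,Q_2$ be strongly connected quivers with $Q_1\subset Q_2$ (i.e. $V(Q_1)\subset V(Q_2)$ and $A(Q_1)\subset A(Q_2)$). Then $\#A(Q_2)-\#A(Q_1)\geq \#V(Q_2)-\#V(Q_1)+1$.
   Context: A quiver is a finite oriented graph with vertex set $V(\cdot)$ and arrow set $A(\cdot)$. A quiver is strongly connected if there is a closed (oriented) path in it passing through all its vertices. *)

theory Defs
  imports Main
begin

definition quiver :: "'v set \<Rightarrow> 'e set \<Rightarrow> ('e \<Rightarrow> 'v) \<Rightarrow> ('e \<Rightarrow> 'v) \<Rightarrow> bool" where
  "quiver V A src tgt \<longleftrightarrow> finite V \<and> finite A \<and> (\<forall>e\<in>A. src e \<in> V \<and> tgt e \<in> V)"

definition closed_path :: "'e set \<Rightarrow> ('e \<Rightarrow> 'v) \<Rightarrow> ('e \<Rightarrow> 'v) \<Rightarrow> 'e list \<Rightarrow> bool" where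
  "closed_path A src tgt es \<longleftrightarrow> es \<noteq> [] \<and> set es \<subseteq> A \<and>
     (\<forall>i. Suc i < length es \<longrightarrow> tgt (es ! i) = src (es ! Suc i)) \<and>
     tgt (last es) = src (hd es)"

definition path_vertices :: "('e \<Rightarrow> 'v) \<Rightarrow> ('e \<Rightarrow> 'v) \<Rightarrow> 'e list \<Rightarrow> 'v set" where
  "path_vertices src tgt es = src ` set es \<union> tgt ` set es"

definition strongly_connected :: "'v set \<Rightarrow> 'e set \<Rightarrow> ('e \<Rightarrow> 'v) \<Rightarrow> ('e \<Rightarrow> 'v) \<Rightarrow> bool" where
  "strongly_connected V A src tgt \<longleftrightarrow> quiver V A src tgt \<and>
     (\<exists>es. closed_path A src tgt es \<and> V \<subseteq> path_vertices src tgt es)"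

end

theory Submission
  imports Defs
begin

lemma tgt_is_src:
  assumes "closed_path A src tgt es" "e \<in> set es"
  shows "\<exists>e'\<in>set es. src e' = tgt e"
proof -
  obtain i where i: "i < length es" "es ! i = e" using assms(2) by (auto simp: in_set_conv_nth)
  show ?thesis
  proof (cases "Suc i < length es")
    case True
    then show ?thesis using assms(1) i unfolding closed_path_def
      by (metis nth_mem)
  next
    case False
    then have "e = last es" using i assms(1) unfolding closed_path_def
      by (metis Suc_lessI diff_Suc_1 last_conv_nth length_0_conv less_nat_zero_code)
    then show ?thesis using assms(1) unfolding closed_path_def by (metis hd_in_set)
  qed
qed

lemma propagate:
  assumes cp: "closed_path A src tgt es"
    and h: "\<forall>e\<in>set es. src e \<in> S \<longrightarrow> tgt e \<in> S"
    and i: "i < length es" "src (es ! i) \<in> S"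
  shows "\<forall>j. i \<le> j \<longrightarrow> j < length es \<longrightarrow> src (es ! j) \<in> S"
proof (intro allI impI)
  fix j assume "i \<le> j" "j < length es"
  then show "src (es ! j) \<in> S"
  proof (induction j rule: dec_induct)
    case base then show ?case using i by simp
  next
    case (step n)
    then have "src (es ! n) \<in> S" by simp
    then have "tgt (es ! n) \<in> S" using h step by auto
    then show ?case using cp step unfolding closed_path_def by auto
  qed
qed

lemma all_src:
  assumes cp: "closed_path A src tgt es"
    and h: "\<forall>e\<in>set es. src e \<in> S \<longrightarrow> tgt e \<in> S"
    and ex: "\<exists>e\<in>set es. src e \<in> S"
  shows "\<forall>e\<in>set es. src e \<in> S"
proof -
  obtain i where i: "i < length es" "src (es ! i) \<in> S" using ex by (auto simp: in_set_conv_nth)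
  have ne: "es \<noteq> []" using cp unfolding closed_path_def by simp
  have "src (es ! (length es - 1)) \<in> S" using propagate[OF cp h i] i by auto
  then have "src (last es) \<in> S" using ne by (simp add: last_conv_nth)
  then have "tgt (last es) \<in> S" using h ne by auto
  then have "src (es ! 0) \<in> S" using cp ne unfolding closed_path_def by (simp add: hd_conv_nth)
  then have "\<forall>j. 0 \<le> j \<longrightarrow> j < length es \<longrightarrow> src (es ! j) \<in> S"
    using propagate[OF cp h, of 0] ne by auto
  then show ?thesis by (auto simp: in_set_conv_nth)
qed

theorem lemma2p3:
  fixes V1 V2 :: "'v set" and A1 A2 :: "'e set" and src tgt :: "'e \<Rightarrow> 'v"
  assumes "strongly_connected V1 A1 src tgt"
    and "strongly_connected V2 A2 src tgt"
    and "V1 \<subseteq> V2" and "A1 \<subseteq> A2"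
    and "V1 \<noteq> V2 \<or> A1 \<noteq> A2"
  shows "int (card A2) - int (card A1) \<ge> int (card V2) - int (card V1) + 1"
proof -
  have q1: "quiver V1 A1 src tgt" and q2: "quiver V2 A2 src tgt"
    using assms(1,2) unfolding strongly_connected_def by auto
  obtain es1 where es1: "closed_path A1 src tgt es1" "V1 \<subseteq> path_vertices src tgt es1"
    using assms(1) unfolding strongly_connected_def by auto
  obtain es where es: "closed_path A2 src tgt es" "V2 \<subseteq> path_vertices src tgt es"
    using assms(2) unfolding strongly_connected_def by auto
  have fA2: "finite A2" and fV2: "finite V2" using q2 unfolding quiver_def by auto
  have fA1: "finite A1" and fV1: "finite V1" using q1 unfolding quiver_def by auto
  have cA: "int (card A2) - int (card A1) = int (card (A2 - A1))"
    using card_Diff_subset[OF fA1 assms(4)] card_mono[OF fA2 assms(4)] by simp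
  have cV: "int (card V2) - int (card V1) = int (card (V2 - V1))"
    using card_Diff_subset[OF fV1 assms(3)] card_mono[OF fV2 assms(3)] by simp
  have srcex: "\<forall>v\<in>V2. \<exists>e\<in>set es. src e = v"
  proof
    fix v assume "v \<in> V2"
    then have "v \<in> src ` set es \<union> tgt ` set es" using es(2) unfolding path_vertices_def by auto
    then show "\<exists>e\<in>set es. src e = v" using tgt_is_src[OF es(1)] by fastforce
  qed
  show ?thesis
  proof (cases "V1 = V2")
    case True
    then have "A1 \<noteq> A2" using assms(5) by simp
    then have "card (A2 - A1) \<ge> 1" using fA2 assms(4)
      by (metis Diff_eq_empty_iff One_nat_def Suc_leI card_gt_0_iff finite_Diff subset_antisym)
    then show ?thesis using cA cV True by simp
  next
    case False
    then obtain w where w: "w \<in> V2" "w \<notin> V1" using assms(3) by auto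
    have "es1 \<noteq> []" "set es1 \<subseteq> A1" using es1(1) unfolding closed_path_def by auto
    then obtain e1 where "e1 \<in> A1" by (metis hd_in_set subsetD)
    then have "src e1 \<in> V1" using q1 unfolding quiver_def by auto
    then obtain u where u: "u \<in> set es" "src u \<in> V1" using srcex assms(3) by (metis subsetD)
    obtain ew where ew: "ew \<in> set es" "src ew = w" using srcex w by blast
    have "\<exists>e0\<in>set es. src e0 \<in> V1 \<and> tgt e0 \<notin> V1"
    proof (rule ccontr)
      assume "\<not> ?thesis"
      then have "\<forall>e\<in>set es. src e \<in> V1 \<longrightarrow> tgt e \<in> V1" by auto
      then have "\<forall>e\<in>set es. src e \<in> V1" using all_src[OF es(1)] u by blast
      then show False using ew w by auto
    qed
    then obtain e0 where e0: "e0 \<in> set es" "src e0 \<in> V1" "tgt e0 \<notin> V1" by blast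
    have sA2: "set es \<subseteq> A2" using es(1) unfolding closed_path_def by auto
    define f where "f v = (SOME e. e \<in> set es \<and> src e = v)" for v
    have f: "f v \<in> set es \<and> src (f v) = v" if "v \<in> V2" for v
      unfolding f_def using srcex that by (metis (mono_tags, lifting) someI_ex)
    have injf: "inj_on f (V2 - V1)" by (metis (no_types, lifting) DiffD1 f inj_onI)
    have fsub: "f ` (V2 - V1) \<subseteq> A2 - A1"
    proof
      fix x assume "x \<in> f ` (V2 - V1)"
      then obtain v where v: "v \<in> V2" "v \<notin> V1" "x = f v" by auto
      then have "x \<in> A2" "src x = v" using f sA2 by auto
      moreover have "x \<notin> A1" using q1 v \<open>src x = v\<close> unfolding quiver_def by auto
      ultimately show "x \<in> A2 - A1" by simp
    qed
    have e0in: "e0 \<in> A2 - A1" using e0 sA2 q1 unfolding quiver_def by auto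
    have e0n: "e0 \<notin> f ` (V2 - V1)" using f e0 by auto
    have "card (insert e0 (f ` (V2 - V1))) \<le> card (A2 - A1)"
      using fsub e0in fA2 by (intro card_mono) auto
    moreover have "card (insert e0 (f ` (V2 - V1))) = card (V2 - V1) + 1"
      using e0n injf fV2 by (simp add: card_image)
    ultimately show ?thesis using cA cV by simp
  qed
qed

end
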